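(* Let $G=\langle c,s\rangle$ and $K$ be as in the context, let $n\ge1$ and let $\gamma,\gamma_1,\ldots,\gamma_n,\beta_1,\ldots,\beta_n$ be integers. For $i=1,\ldots,n$ let $B_i=\{j:\gamma_j=\gamma_i\}$, let $\gamma_0=\max\{|\gamma_1|,\ldots,|\gamma_n|\}$, and let $F=(c^{s^{\gamma_1}})^{\beta_1}\cdots(c^{s^{\gamma_n}})^{\beta_n}\in K^{\langle s\rangle}$, regarded as a function $\langle s\rangle\to K$. Then the element $w=F s^{\gamma}$ is trivial in $G$ if and only if $\gamma=0$, $\sum_{j\in B_i}\beta_j=0$ for $i=1,\ldots,n$, and $F(s^{\mu})=1$ in $K$ for all integers $\mu$ with $-3\gamma_0\le\mu\le3\gamma_0$.
   Context: Notation: $x^y=yxy^{-1}$. For groups $A,B$, the wreath product $A\,\mathrm{Wr}\,B$ is the semidirect product $A^B\rtimes B$, where $A^B$ is the group of all functions $B\to A$ with pointwise multiplication and $B$ acts by $(bf)(x)=f(xb)$, written $f^b=bfb^{-1}$. $H$ is a group generated by a countable set $\{a^{(1)},a^{(2)},\ldots\}$. Let $Z=\langle z\rangle$ be infinite cyclic and $b^{(i)}\in H^Z$ with $b^{(i)}(z^k)=a^{(i)}$ if $k>0$ and $1$ otherwise; $K=\langle z,b^{(i)}\ (i\in\mathbb{N})\rangle\le H\,\mathrm{Wr}\,Z$. Let $\langle s\rangle$ be infinite cyclic and $c\in K^{\langle s\rangle}$ with $c(s)=z$, $c(s^{2^i})=b^{(i)}$ for $i>0$, $c(s^k)=1$ otherwise;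 $G=\langle c,s\rangle\le K\,\mathrm{Wr}\,\langle s\rangle$. *)

theory Defs
  imports "HOL-Algebra.Algebra"
begin

text \<open>Unrestricted wreath product  A Wr Z  with Z infinite cyclic, identified with int
  (the element z^k is represented by k).  An element f z^k is the pair (f,k), with
  f : Z \<rightarrow> A arbitrary.  The action is (b f)(x) = f(x b), so
  (f,k)(g,l) = (f \<cdot> (z^k g), k+l) with (z^k g)(x) = g(x+k).\<close>

definition wreath :: "('a,'b) monoid_scheme \<Rightarrow> ((int \<Rightarrow> 'a) \<times> int) monoid" where
  "wreath A = \<lparr>carrier = {(f,k). \<forall>x. f x \<in> carrier A},
     monoid.mult = (\<lambda>(f,k) (g,l). (\<lambda>x. f x \<otimes>\<^bsub>A\<^esub> g (x + k), k + l)),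
     monoid.one = (\<lambda>_. \<one>\<^bsub>A\<^esub>, 0)\<rparr>"

definition conjg :: "('a,'b) monoid_scheme \<Rightarrow> 'a \<Rightarrow> 'a \<Rightarrow> 'a" where
  "conjg M x y = y \<otimes>\<^bsub>M\<^esub> x \<otimes>\<^bsub>M\<^esub> inv\<^bsub>M\<^esub> y"

definition zgen :: "('a,'b) monoid_scheme \<Rightarrow> (int \<Rightarrow> 'a) \<times> int" where
  "zgen H = (\<lambda>_. \<one>\<^bsub>H\<^esub>, 1)"

definition bgen :: "('a,'b) monoid_scheme \<Rightarrow> (nat \<Rightarrow> 'a) \<Rightarrow> nat \<Rightarrow> (int \<Rightarrow> 'a) \<times> int" where
  "bgen H a i = (\<lambda>k. if k > 0 then a i else \<one>\<^bsub>H\<^esub>, 0)"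

definition Kgrp :: "('a,'b) monoid_scheme \<Rightarrow> (nat \<Rightarrow> 'a) \<Rightarrow> ((int \<Rightarrow> 'a) \<times> int) monoid" where
  "Kgrp H a = (wreath H)\<lparr>carrier := generate (wreath H) (insert (zgen H) (bgen H a ` {1..}))\<rparr>"

text \<open>The ambient group K Wr <s>, s^k represented by k.\<close>
definition Wgrp where "Wgrp H a = wreath (Kgrp H a)"

definition sgen where "sgen H a = ((\<lambda>_. \<one>\<^bsub>Kgrp H a\<^esub>), (1::int))"

definition cgen where
  "cgen H a = ((\<lambda>k::int. if k = 1 then zgen H
       else if (\<exists>i::nat. i > 0 \<and> k = 2 ^ i) then bgen H a (SOME i::nat. i > 0 \<and> k = 2 ^ i)
       else \<one>\<^bsub>Kgrp H a\<^esub>), (0::int))"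

definition Fword where
  "Fword H a n gam bet = foldr (\<lambda>j acc.
       (conjg (Wgrp H a) (cgen H a) (sgen H a [^]\<^bsub>Wgrp H a\<^esub> (gam j :: int))) [^]\<^bsub>Wgrp H a\<^esub> (bet j :: int)
         \<otimes>\<^bsub>Wgrp H a\<^esub> acc)
     [1..<Suc n] \<one>\<^bsub>Wgrp H a\<^esub>"

end

theory Submission imports Defs begin

lemma wr_carrier[simp]: "(f,k) \<in> carrier (wreath A) \<longleftrightarrow> (\<forall>x. f x \<in> carrier A)"
  by (simp add: wreath_def)

lemma wr_mult[simp]: "(f,k) \<otimes>\<^bsub>wreath A\<^esub> (g,l) = (\<lambda>x. f x \<otimes>\<^bsub>A\<^esub> g (x + k), k + l)"
  by (simp add: wreath_def)

lemma wr_one: "\<one>\<^bsub>wreath A\<^esub> = (\<lambda>_. \<one>\<^bsub>A\<^esub>, 0)"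
  by (simp add: wreath_def)

lemma wreath_group:
  assumes "group A" shows "group (wreath A)"
proof (rule groupI)
  interpret A: group A by fact
  show "x \<otimes>\<^bsub>wreath A\<^esub> y \<in> carrier (wreath A)" if "x \<in> carrier (wreath A)" "y \<in> carrier (wreath A)" for x y
    using that by (cases x; cases y) auto
  show "\<one>\<^bsub>wreath A\<^esub> \<in> carrier (wreath A)" by (simp add: wr_one)
  show "x \<otimes>\<^bsub>wreath A\<^esub> y \<otimes>\<^bsub>wreath A\<^esub> z = x \<otimes>\<^bsub>wreath A\<^esub> (y \<otimes>\<^bsub>wreath A\<^esub> z)"
    if "x \<in> carrier (wreath A)" "y \<in> carrier (wreath A)" "z \<in> carrier (wreath A)" for x y z
    using that by (cases x; cases y; cases z) (auto simp: A.m_assoc add.assoc)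
  show "\<one>\<^bsub>wreath A\<^esub> \<otimes>\<^bsub>wreath A\<^esub> x = x" if "x \<in> carrier (wreath A)" for x
    using that by (cases x) (auto simp: wr_one)
  show "\<exists>y\<in>carrier (wreath A). y \<otimes>\<^bsub>wreath A\<^esub> x = \<one>\<^bsub>wreath A\<^esub>" if "x \<in> carrier (wreath A)" for x
  proof (cases x)
    case (Pair f k)
    show ?thesis
      by (rule bexI[of _ "(\<lambda>x. inv\<^bsub>A\<^esub> f (x - k), -k)"]) (use that Pair in \<open>auto simp: wr_one\<close>)
  qed
qed

lemma wr_inv:
  assumes "group A" "\<forall>x. f x \<in> carrier A"
  shows "inv\<^bsub>wreath A\<^esub> (f,k) = (\<lambda>x. inv\<^bsub>A\<^esub> f (x - k), -k)"
proof -
  interpret A: group A by fact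
  interpret W: group "wreath A" by (rule wreath_group) fact
  show ?thesis by (rule W.inv_equality) (use assms(2) in \<open>auto simp: wr_one\<close>)
qed

lemma wr_pow0_nat:
  assumes "group A" "\<forall>x. f x \<in> carrier A"
  shows "(f,0) [^]\<^bsub>wreath A\<^esub> (m::nat) = (\<lambda>x. f x [^]\<^bsub>A\<^esub> m, 0)"
proof (induction m)
  case 0 then show ?case by (simp add: wr_one)
next
  case (Suc m) then show ?case by simp
qed

lemma wr_pow0:
  assumes "group A" "\<forall>x. f x \<in> carrier A"
  shows "(f,0) [^]\<^bsub>wreath A\<^esub> (m::int) = (\<lambda>x. f x [^]\<^bsub>A\<^esub> m, 0)"
proof -
  interpret A: group A by fact
  interpret W: group "wreath A" by (rule wreath_group) fact
  show ?thesis
  proof (cases "m \<ge> 0")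
    case True
    then obtain k where "m = int k" using nonneg_eq_int by blast
    then show ?thesis using wr_pow0_nat[OF assms] by (simp add: int_pow_int)
  next
    case False
    then obtain k where k: "m = - int k" by (metis neg_0_le_iff_le nle_le nonneg_eq_int verit_minus_simplify(4))
    have "(f,0) \<in> carrier (wreath A)" using assms(2) by simp
    then show ?thesis using wr_pow0_nat[OF assms] assms(2) k
      by (simp add: W.int_pow_neg_int A.int_pow_neg_int wr_inv[OF assms(1)])
  qed
qed

lemma wr_pows_nat:
  assumes "group A"
  shows "(\<lambda>_. \<one>\<^bsub>A\<^esub>, 1::int) [^]\<^bsub>wreath A\<^esub> (m::nat) = (\<lambda>_. \<one>\<^bsub>A\<^esub>, int m)"
proof -
  interpret A: group A by fact
  show ?thesis by (induction m) (auto simp: wr_one)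
qed

lemma wr_pows:
  assumes "group A"
  shows "(\<lambda>_. \<one>\<^bsub>A\<^esub>, 1::int) [^]\<^bsub>wreath A\<^esub> (m::int) = (\<lambda>_. \<one>\<^bsub>A\<^esub>, m)"
proof -
  interpret A: group A by fact
  interpret W: group "wreath A" by (rule wreath_group) fact
  show ?thesis
  proof (cases "m \<ge> 0")
    case True
    then obtain k where "m = int k" using nonneg_eq_int by blast
    then show ?thesis using wr_pows_nat[OF assms] by (simp add: int_pow_int)
  next
    case False
    then obtain k where k: "m = - int k" by (metis neg_0_le_iff_le nle_le nonneg_eq_int verit_minus_simplify(4))
    then show ?thesis using wr_pows_nat[OF assms]
      by (simp add: W.int_pow_neg_int wr_inv[OF assms(1)])
  qed
qed

lemma wr_conj:
  assumes "group A" "\<forall>x. f x \<in> carrier A"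
  shows "conjg (wreath A) (f,0) (\<lambda>_. \<one>\<^bsub>A\<^esub>, m) = (\<lambda>x. f (x + m), 0)"
proof -
  interpret A: group A by fact
  show ?thesis using assms(2) by (simp add: conjg_def wr_inv[OF assms(1)])
qed

lemma wr_foldr:
  "foldr (\<lambda>j acc. (g j, 0::int) \<otimes>\<^bsub>wreath A\<^esub> acc) xs \<one>\<^bsub>wreath A\<^esub>
     = (\<lambda>x. foldr (\<lambda>j acc. g j x \<otimes>\<^bsub>A\<^esub> acc) xs \<one>\<^bsub>A\<^esub>, 0)"
  by (induction xs) (auto simp: wr_one)


lemma foldr_single:
  assumes "group G" "e \<in> carrier G"
    and "\<And>j. j \<in> set xs \<Longrightarrow> g j = (if P j then e else \<one>\<^bsub>G\<^esub>)"
  shows "foldr (\<lambda>j acc. g j [^]\<^bsub>G\<^esub> (bet j::int) \<otimes>\<^bsub>G\<^esub> acc) xs \<one>\<^bsub>G\<^esub>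
     = e [^]\<^bsub>G\<^esub> (\<Sum>j\<leftarrow>xs. if P j then bet j else 0)"
  using assms(3)
proof (induction xs)
  case Nil
  interpret G: group G by fact
  show ?case by simp
next
  case (Cons j xs)
  interpret G: group G by fact
  have IH: "foldr (\<lambda>j acc. g j [^]\<^bsub>G\<^esub> (bet j::int) \<otimes>\<^bsub>G\<^esub> acc) xs \<one>\<^bsub>G\<^esub>
     = e [^]\<^bsub>G\<^esub> (\<Sum>j\<leftarrow>xs. if P j then bet j else 0)" using Cons by simp
  show ?case using Cons.prems[of j] assms(2) by (simp add: IH G.int_pow_mult)
qed

lemma snd_pow:
  assumes "group G" "\<And>x y. snd (x \<otimes>\<^bsub>G\<^esub> y) = snd x + snd (y::'c \<times> int)" "x \<in> carrier G"
  shows "snd (x [^]\<^bsub>G\<^esub> (m::int)) = m * snd x"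
proof -
  interpret G: group G by fact
  have one: "snd \<one>\<^bsub>G\<^esub> = 0" using assms(2)[of "\<one>\<^bsub>G\<^esub>" "\<one>\<^bsub>G\<^esub>"] by simp
  have nat: "snd (x [^]\<^bsub>G\<^esub> (k::nat)) = int k * snd x" for k
    by (induction k) (auto simp: one assms(2) algebra_simps)
  have inv: "snd (inv\<^bsub>G\<^esub> y) = - snd y" if "y \<in> carrier G" for y
    using assms(2)[of y "inv\<^bsub>G\<^esub> y"] G.r_inv[OF that] one by simp
  show ?thesis
  proof (cases "m \<ge> 0")
    case True
    then obtain k where "m = int k" using nonneg_eq_int by blast
    then show ?thesis using nat by (simp add: int_pow_int)
  next
    case False
    then obtain k where k: "m = - int k" by (metis neg_0_le_iff_le nle_le nonneg_eq_int verit_minus_simplify(4))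
    then show ?thesis using nat inv assms(3) by (simp add: G.int_pow_neg_int)
  qed
qed

lemma snd_foldr:
  assumes "group G" "\<And>x y. snd (x \<otimes>\<^bsub>G\<^esub> y) = snd x + snd (y::'c \<times> int)"
    "\<And>j. g j \<in> carrier G"
  shows "snd (foldr (\<lambda>j acc. g j [^]\<^bsub>G\<^esub> (bet j::int) \<otimes>\<^bsub>G\<^esub> acc) xs \<one>\<^bsub>G\<^esub>)
     = (\<Sum>j\<leftarrow>xs. bet j * snd (g j))"
proof -
  interpret G: group G by fact
  have one: "snd \<one>\<^bsub>G\<^esub> = 0" using assms(2)[of "\<one>\<^bsub>G\<^esub>" "\<one>\<^bsub>G\<^esub>"] by simp
  show ?thesis by (induction xs) (auto simp: one assms(2) snd_pow[OF assms(1,2,3)])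
qed

lemma pow2_unique:
  assumes "(2::int)^p > 2*g" "(2::int)^q > 2*g" "\<bar>(2::int)^p - 2^q\<bar> \<le> 2*g"
  shows "p = q"
proof (rule ccontr)
  assume "p \<noteq> q"
  then consider "p < q" | "q < p" by linarith
  then show False
  proof cases
    case 1
    then have "(2::int)^q \<ge> 2^(Suc p)" by (intro power_increasing) auto
    then show False using assms by auto
  next
    case 2
    then have "(2::int)^p \<ge> 2^(Suc q)" by (intro power_increasing) auto
    then show False using assms by auto
  qed
qed


theorem lemma4:
  fixes H :: "('a,'b) monoid_scheme" and a :: "nat \<Rightarrow> 'a"
    and n :: nat and \<gamma> :: int and gam bet :: "nat \<Rightarrow> int"
  assumes "group H"
    and "a ` {1..} \<subseteq> carrier H"
    and "generate H (a ` {1..}) = carrier H"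
    and "n \<ge> 1"
  defines "F \<equiv> Fword H a n gam bet"
    and "\<gamma>0 \<equiv> Max ((\<lambda>j. \<bar>gam j\<bar>) ` {1..n})"
  shows "F \<otimes>\<^bsub>Wgrp H a\<^esub> (sgen H a [^]\<^bsub>Wgrp H a\<^esub> \<gamma>) = \<one>\<^bsub>Wgrp H a\<^esub> \<longleftrightarrow>
           \<gamma> = 0
         \<and> (\<forall>i\<in>{1..n}. (\<Sum>j\<in>{j\<in>{1..n}. gam j = gam i}. bet j) = 0)
         \<and> (\<forall>\<mu>::int. -3 * \<gamma>0 \<le> \<mu> \<and> \<mu> \<le> 3 * \<gamma>0 \<longrightarrow> fst F \<mu> = \<one>\<^bsub>Kgrp H a\<^esub>)"
proof -
  interpret Hg: group H by fact
  let ?S = "insert (zgen H) (bgen H a ` {1..})"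
  let ?K = "Kgrp H a"
  let ?W = "Wgrp H a"
  have gWH: "group (wreath H)" by (rule wreath_group) fact
  have Ssub: "?S \<subseteq> carrier (wreath H)" using assms(2) by (auto simp: zgen_def bgen_def)
  have sub: "subgroup (generate (wreath H) ?S) (wreath H)"
    by (rule group.generate_is_subgroup[OF gWH Ssub])
  have gK: "group ?K" unfolding Kgrp_def by (rule subgroup.subgroup_is_group[OF sub gWH])
  interpret K: group ?K by (rule gK)
  have gW: "group ?W" unfolding Wgrp_def by (rule wreath_group[OF gK])
  interpret Wg: group ?W by (rule gW)
  have Kmult: "x \<otimes>\<^bsub>?K\<^esub> y = x \<otimes>\<^bsub>wreath H\<^esub> y" for x y by (simp add: Kgrp_def)
  have Ksnd: "snd (x \<otimes>\<^bsub>?K\<^esub> y) = snd x + snd y" for x y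
    by (cases x; cases y) (simp add: Kmult)
  have Kcar: "carrier ?K = generate (wreath H) ?S" by (simp add: Kgrp_def)
  have Kone: "\<one>\<^bsub>?K\<^esub> = (\<lambda>_. \<one>\<^bsub>H\<^esub>, 0)" by (simp add: Kgrp_def wr_one)
  define cf where "cf = fst (cgen H a)"
  have cgen_eq: "cgen H a = (cf, 0)" by (simp add: cf_def cgen_def)
  have cf_car: "cf y \<in> carrier ?K" for y
  proof -
    have "zgen H \<in> carrier ?K" unfolding Kcar by (rule generate.incl) simp
    moreover have "bgen H a (SOME i::nat. i > 0 \<and> y = 2 ^ i) \<in> carrier ?K"
      if "\<exists>i::nat. i > 0 \<and> y = 2 ^ i"
    proof -
      have "(SOME i::nat. i > 0 \<and> y = 2 ^ i) > 0" using someI_ex[OF that] by blast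
      then show ?thesis unfolding Kcar by (intro generate.incl) auto
    qed
    ultimately show ?thesis by (auto simp: cf_def cgen_def)
  qed
  have cf_triv: "cf y = \<one>\<^bsub>?K\<^esub>" if "\<not>(\<exists>i::nat. y = 2^i)" for y
  proof -
    have "y \<noteq> 1" using that by (metis power_0)
    moreover have "\<not>(\<exists>i::nat. i>0 \<and> y = 2^i)" using that by blast
    ultimately show ?thesis unfolding cf_def cgen_def by (simp only: if_False fst_conv)
  qed
  have cf_snd: "snd (cf y) = (if y = 1 then 1 else 0)" for y
    by (simp add: cf_def cgen_def zgen_def bgen_def Kone)
  have s_eq: "sgen H a [^]\<^bsub>?W\<^esub> m = (\<lambda>_. \<one>\<^bsub>?K\<^esub>, m)" for m :: int
    unfolding sgen_def Wgrp_def by (rule wr_pows[OF gK])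
  have term_eq: "(conjg ?W (cgen H a) (sgen H a [^]\<^bsub>?W\<^esub> (gam j))) [^]\<^bsub>?W\<^esub> (bet j)
      = (\<lambda>x. cf (x + gam j) [^]\<^bsub>?K\<^esub> bet j, 0)" for j
  proof -
    have "conjg ?W (cgen H a) (sgen H a [^]\<^bsub>?W\<^esub> (gam j)) = (\<lambda>x. cf (x + gam j), 0)"
      unfolding s_eq cgen_eq unfolding Wgrp_def by (rule wr_conj[OF gK]) (simp add: cf_car)
    then show ?thesis unfolding Wgrp_def by (simp add: wr_pow0[OF gK] cf_car)
  qed
  define Ff where "Ff x = foldr (\<lambda>j acc. cf (x + gam j) [^]\<^bsub>?K\<^esub> bet j \<otimes>\<^bsub>?K\<^esub> acc) [1..<Suc n] \<one>\<^bsub>?K\<^esub>" for x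
  have F_eq: "F = (Ff, 0)"
    unfolding F_def Fword_def term_eq unfolding Ff_def Wgrp_def by (rule wr_foldr)
  have Ff_car: "Ff x \<in> carrier ?K" for x
  proof -
    have "foldr (\<lambda>j acc. cf (x + gam j) [^]\<^bsub>?K\<^esub> bet j \<otimes>\<^bsub>?K\<^esub> acc) xs \<one>\<^bsub>?K\<^esub> \<in> carrier ?K" for xs
      by (induction xs) (auto simp: cf_car)
    then show ?thesis by (simp add: Ff_def)
  qed
  have lhs: "F \<otimes>\<^bsub>?W\<^esub> (sgen H a [^]\<^bsub>?W\<^esub> \<gamma>) = \<one>\<^bsub>?W\<^esub> \<longleftrightarrow> \<gamma> = 0 \<and> (\<forall>x. Ff x = \<one>\<^bsub>?K\<^esub>)"
    unfolding F_eq s_eq unfolding Wgrp_def by (auto simp: wr_one Ff_car fun_eq_iff)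
  have fin: "finite {1..n}" by simp
  have gbound: "\<bar>gam j\<bar> \<le> \<gamma>0" if "j \<in> {1..n}" for j
    unfolding \<gamma>0_def using that by (intro Max_ge) auto
  have g0nn: "\<gamma>0 \<ge> 0" using gbound[of 1] assms(4) by auto
  have setu: "set [1..<Suc n] = {1..n}" by auto
  have sumconv: "(\<Sum>j\<leftarrow>[1..<Suc n]. f j) = (\<Sum>j\<in>{1..n}. f j)" for f :: "nat \<Rightarrow> int"
    by (metis setu sum_set_upt_conv_sum_list_nat)
  have snd_Ff: "snd (Ff x) = (\<Sum>j\<in>{1..n}. if x + gam j = 1 then bet j else 0)" for x
  proof -
    have "snd (Ff x) = (\<Sum>j\<leftarrow>[1..<Suc n]. bet j * snd (cf (x + gam j)))"
      unfolding Ff_def by (rule snd_foldr[OF gK Ksnd, of "\<lambda>j. cf (x + gam j)"]) (rule cf_car)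
    also have "\<dots> = (\<Sum>j\<in>{1..n}. if x + gam j = 1 then bet j else 0)"
      unfolding sumconv by (rule sum.cong) (auto simp: cf_snd)
    finally show ?thesis .
  qed
  have main: "(\<forall>x. Ff x = \<one>\<^bsub>?K\<^esub>) \<longleftrightarrow>
       (\<forall>i\<in>{1..n}. (\<Sum>j\<in>{j\<in>{1..n}. gam j = gam i}. bet j) = 0)
     \<and> (\<forall>\<mu>::int. -3 * \<gamma>0 \<le> \<mu> \<and> \<mu> \<le> 3 * \<gamma>0 \<longrightarrow> Ff \<mu> = \<one>\<^bsub>?K\<^esub>)"
  proof
    assume A: "\<forall>x. Ff x = \<one>\<^bsub>?K\<^esub>"
    have "(\<Sum>j\<in>{j\<in>{1..n}. gam j = gam i}. bet j) = 0" if "i \<in> {1..n}" for i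
    proof -
      have "snd (Ff (1 - gam i)) = 0" using A Kone by simp
      then have "(\<Sum>j\<in>{1..n}. if gam j = gam i then bet j else 0) = 0"
        unfolding snd_Ff by (smt (verit, del_insts) sum.cong)
      then show ?thesis by (simp only: sum.inter_filter[OF fin])
    qed
    then show "(\<forall>i\<in>{1..n}. (\<Sum>j\<in>{j\<in>{1..n}. gam j = gam i}. bet j) = 0)
     \<and> (\<forall>\<mu>::int. -3 * \<gamma>0 \<le> \<mu> \<and> \<mu> \<le> 3 * \<gamma>0 \<longrightarrow> Ff \<mu> = \<one>\<^bsub>?K\<^esub>)" using A by blast
  next
    assume B: "(\<forall>i\<in>{1..n}. (\<Sum>j\<in>{j\<in>{1..n}. gam j = gam i}. bet j) = 0)
     \<and> (\<forall>\<mu>::int. -3 * \<gamma>0 \<le> \<mu> \<and> \<mu> \<le> 3 * \<gamma>0 \<longrightarrow> Ff \<mu> = \<one>\<^bsub>?K\<^esub>)"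
    have triv_all: "Ff x = \<one>\<^bsub>?K\<^esub>" if T: "\<And>j. j \<in> {1..n} \<Longrightarrow> \<not>(\<exists>i::nat. x + gam j = 2^i)" for x
    proof -
      have "Ff x = \<one>\<^bsub>?K\<^esub> [^]\<^bsub>?K\<^esub> (\<Sum>j\<leftarrow>[1..<Suc n]. if False then bet j else 0)"
        unfolding Ff_def
        by (rule foldr_single[OF gK, of _ _ "\<lambda>j. cf (x + gam j)"]) (auto simp: cf_triv T)
      then show ?thesis by simp
    qed
    show "\<forall>x. Ff x = \<one>\<^bsub>?K\<^esub>"
    proof
      fix x
      consider "\<bar>x\<bar> \<le> 3*\<gamma>0" | "x < -3*\<gamma>0" | "x > 3*\<gamma>0" by linarith
      then show "Ff x = \<one>\<^bsub>?K\<^esub>"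
      proof cases
        case 1 then show ?thesis using B by (simp add: abs_le_iff)
      next
        case 2
        have "\<not>(\<exists>i::nat. x + gam j = 2^i)" if "j \<in> {1..n}" for j
        proof -
          have "x + gam j < 0" using gbound[OF that] 2 g0nn by linarith
          then show ?thesis by (metis not_less zero_le_power zero_le_numeral)
        qed
        then show ?thesis by (rule triv_all)
      next
        case 3
        show ?thesis
        proof (cases "\<exists>j0\<in>{1..n}. \<exists>p::nat. x + gam j0 = 2^p")
          case False
          then show ?thesis by (intro triv_all) blast
        next
          case True
          then obtain j0 p where j0: "j0 \<in> {1..n}" and p: "x + gam j0 = 2^p" by blast
          have gj: "cf (x + gam j) = (if gam j = gam j0 then cf (2^p) else \<one>\<^bsub>?K\<^esub>)"
            if "j \<in> set [1..<Suc n]" for j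
          proof (cases "gam j = gam j0")
            case True then show ?thesis using p by simp
          next
            case False
            have jj: "j \<in> {1..n}" using that by auto
            have "\<not>(\<exists>q::nat. x + gam j = 2^q)"
            proof
              assume "\<exists>q::nat. x + gam j = 2^q"
              then obtain q where q: "x + gam j = 2^q" by blast
              have "p = q"
                by (rule pow2_unique[of \<gamma>0]) (use gbound[OF jj] gbound[OF j0] 3 p q in auto)
              then show False using p q False by simp
            qed
            then show ?thesis using False cf_triv by simp
          qed
          have "Ff x = cf (2^p) [^]\<^bsub>?K\<^esub> (\<Sum>j\<leftarrow>[1..<Suc n]. if gam j = gam j0 then bet j else 0)"
            unfolding Ff_def
            by (rule foldr_single[OF gK cf_car, of _ "\<lambda>j. cf (x + gam j)"]) (rule gj)
          also have "(\<Sum>j\<leftarrow>[1..<Suc n]. if gam j = gam j0 then bet j else 0) = 0"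
            unfolding sumconv sum.inter_filter[OF fin, symmetric] using B j0 by blast
          finally show ?thesis by simp
        qed
      qed
    qed
  qed
  have fF: "fst F = Ff" by (simp add: F_eq)
  show ?thesis unfolding lhs fF main by blast
qed

end
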